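(* Let $n\ge2$, $r\ge1$, and let $\mathbf Z_\vartriangle(n,r)\subseteq\mathrm{End}_{\mathbb Q(v)}(\boldsymbol\Omega^{\otimes r})$ be as in the context. Then the set $$\{\sigma_1^{\lambda_1}\cdots\sigma_{r-1}^{\lambda_{r-1}}\sigma_r^{\lambda_r}\mid \lambda_1,\dots,\lambda_{r-1}\in\mathbb N,\ \lambda_r\in\mathbb Z\}$$ is a $\mathbb Q(v)$-basis of $\mathbf Z_\vartriangle(n,r)$; in other words $\mathbf Z_\vartriangle(n,r)$ is a polynomial ring in $\sigma_1,\dots,\sigma_{r-1}$ over the Laurent polynomial ring $\mathbb Q(v)[\sigma_r,\sigma_r^{-1}]$.
   Context: $\boldsymbol\Omega$ is the $\mathbb Q(v)$-space with basis $\{\omega_s\}_{s\in\mathbb Z}$ and $\boldsymbol\Omega^{\otimes r}$ has basis $\omega_{\mathbf i}=\omega_{i_1}\otimes\cdots\otimes\omega_{i_r}$, $\mathbf i\in\mathbb Z^r$. For $1\le s\le r$ let $\phi_s$ be the invertible linear map $\omega_{\mathbf i}\mapsto\omega_{\mathbf i-n\mathbf e_s}$ (subtract $n$ from the $s$-th index); the $\phi_s$ commute. Let $\sigma_s$ ($1\le s\le r$) be the $s$-th elementary symmetric polynomial in $\phi_1,\dots,\phi_r$. Let $\mathfrak p_m=\sum_{s=1}^r\phi_s^m$ and $\mathfrak q_m=\sum_{s=1}^r\phi_s^{-m}$, and let $\mathbf Z_\vartriangle(n,r)$ be the $\mathbb Q(v)$-subalgebra generated by all $\mathfrak p_m,\mathfrak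 q_m$ ($m\ge1$); it coincides with the subalgebra generated by $\sigma_1,\dots,\sigma_r,\sigma_r^{-1}$. *)

theory Defs
  imports "HOL-Computational_Algebra.Polynomial" "HOL-Computational_Algebra.Fraction_Field"
begin

text \<open>The ground field Q(v): rational functions in one indeterminate v over the rationals.\<close>
type_synonym qv = "rat poly fract"

text \<open>Vectors of Omega^{tensor r} are coefficient functions on index tuples (lists of length r):
  the vector  sum_i f(i) omega_i  is represented by f.  Linear operators are functions on these.\<close>
type_synonym vec = "int list \<Rightarrow> qv"
type_synonym op = "vec \<Rightarrow> vec"

definition Omega :: "nat \<Rightarrow> vec set" where
  "Omega r = {f. finite {i. f i \<noteq> 0} \<and> (\<forall>i. f i \<noteq> 0 \<longrightarrow> length i = r)}"

text \<open>phi_s : omega_i |-> omega_(i - n e_s), s = 1..r (list position s-1); on coefficients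
  this is  (phi_s f)(j) = f(j + n e_s).  phi_inv s is its inverse.\<close>
definition phi :: "nat \<Rightarrow> nat \<Rightarrow> op" where
  "phi n s = (\<lambda>f j. f (j[s - 1 := j ! (s - 1) + int n]))"

definition phi_inv :: "nat \<Rightarrow> nat \<Rightarrow> op" where
  "phi_inv n s = (\<lambda>f j. f (j[s - 1 := j ! (s - 1) - int n]))"

definition op_add :: "op \<Rightarrow> op \<Rightarrow> op" where
  "op_add A B = (\<lambda>f j. A f j + B f j)"

definition op_smult :: "qv \<Rightarrow> op \<Rightarrow> op" where
  "op_smult c A = (\<lambda>f j. c * A f j)"

definition op_sum :: "('a \<Rightarrow> op) \<Rightarrow> 'a set \<Rightarrow> op" where
  "op_sum F A = (\<lambda>f j. \<Sum>a\<in>A. F a f j)"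

definition op_prod :: "(nat \<Rightarrow> op) \<Rightarrow> nat set \<Rightarrow> op" where
  "op_prod F S = foldr (\<circ>) (map F (sorted_list_of_set S)) id"

definition p_op :: "nat \<Rightarrow> nat \<Rightarrow> nat \<Rightarrow> op" where
  "p_op n r m = op_sum (\<lambda>s. phi n s ^^ m) {1..r}"

definition q_op :: "nat \<Rightarrow> nat \<Rightarrow> nat \<Rightarrow> op" where
  "q_op n r m = op_sum (\<lambda>s. phi_inv n s ^^ m) {1..r}"

inductive_set Zalg :: "nat \<Rightarrow> nat \<Rightarrow> op set" for n r where
  gen_p: "m \<ge> 1 \<Longrightarrow> p_op n r m \<in> Zalg n r"
| gen_q: "m \<ge> 1 \<Longrightarrow> q_op n r m \<in> Zalg n r"
| unit: "id \<in> Zalg n r"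
| add: "A \<in> Zalg n r \<Longrightarrow> B \<in> Zalg n r \<Longrightarrow> op_add A B \<in> Zalg n r"
| smult: "A \<in> Zalg n r \<Longrightarrow> op_smult c A \<in> Zalg n r"
| comp: "A \<in> Zalg n r \<Longrightarrow> B \<in> Zalg n r \<Longrightarrow> A \<circ> B \<in> Zalg n r"

definition sigma :: "nat \<Rightarrow> nat \<Rightarrow> nat \<Rightarrow> op" where
  "sigma n r k = op_sum (op_prod (phi n)) {S. S \<subseteq> {1..r} \<and> card S = k}"

definition sigma_r_inv :: "nat \<Rightarrow> nat \<Rightarrow> op" where
  "sigma_r_inv n r = op_prod (phi_inv n) {1..r}"

definition sigma_r_zpow :: "nat \<Rightarrow> nat \<Rightarrow> int \<Rightarrow> op" where
  "sigma_r_zpow n r k =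
     (if k \<ge> 0 then sigma n r r ^^ nat k else sigma_r_inv n r ^^ nat (- k))"

definition mon_idx :: "nat \<Rightarrow> ((nat \<Rightarrow> nat) \<times> int) set" where
  "mon_idx r = {(lam, k). \<forall>j. (j = 0 \<or> j \<ge> r) \<longrightarrow> lam j = 0}"

definition sigma_mon :: "nat \<Rightarrow> nat \<Rightarrow> (nat \<Rightarrow> nat) \<times> int \<Rightarrow> op" where
  "sigma_mon n r x = op_prod (\<lambda>s. sigma n r s ^^ fst x s) {1..<r} \<circ> sigma_r_zpow n r (snd x)"

end

theory Submission
  imports Defs "HOL-Library.Poly_Mapping"
begin


type_synonym K = "nat \<Rightarrow>\<^sub>0 int"
type_synonym L = "K \<Rightarrow>\<^sub>0 qv"

abbreviation lk where "lk \<equiv> Poly_Mapping.lookup"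
abbreviation sg where "sg \<equiv> Poly_Mapping.single"
abbreviation ks where "ks \<equiv> Poly_Mapping.keys"

definition shift :: "nat \<Rightarrow> K \<Rightarrow> int list \<Rightarrow> int list" where
  "shift n a j = map (\<lambda>i. j ! i + int n * lk a (Suc i)) [0..<length j]"

lemma length_shift[simp]: "length (shift n a j) = length j"
  by (simp add: shift_def)

lemma nth_shift[simp]: "i < length j \<Longrightarrow> shift n a j ! i = j ! i + int n * lk a (Suc i)"
  by (simp add: shift_def)

lemma shift_0[simp]: "shift n 0 j = j"
  by (rule nth_equalityI) auto

lemma shift_add: "shift n (a + b) j = shift n b (shift n a j)"
  by (rule nth_equalityI) (auto simp: lookup_add algebra_simps)

definition ev :: "nat \<Rightarrow> L \<Rightarrow> op" where
  "ev n P = (\<lambda>f j. \<Sum>a\<in>ks P. lk P a * f (shift n a j))"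

lemma ev_superset:
  assumes "finite A" "ks P \<subseteq> A"
  shows "ev n P f j = (\<Sum>a\<in>A. lk P a * f (shift n a j))"
  unfolding ev_def
  by (rule sum.mono_neutral_left) (use assms in \<open>auto simp: in_keys_iff\<close>)

lemma ev_add: "ev n (P + Q) f j = ev n P f j + ev n Q f j"
proof -
  have "ev n (P + Q) f j = (\<Sum>a\<in>ks P \<union> ks Q. lk (P+Q) a * f (shift n a j))"
    by (rule ev_superset) (auto simp: keys_add)
  also have "\<dots> = (\<Sum>a\<in>ks P \<union> ks Q. lk P a * f (shift n a j)) + (\<Sum>a\<in>ks P \<union> ks Q. lk Q a * f (shift n a j))"
    by (simp add: lookup_add algebra_simps sum.distrib)
  also have "\<dots> = ev n P f j + ev n Q f j"
    by (subst (1 2) ev_superset[symmetric]) auto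
  finally show ?thesis .
qed

lemma ev_zero[simp]: "ev n 0 f j = 0"
  by (simp add: ev_def)

lemma ev_sum: "ev n (sum g A) f j = (\<Sum>a\<in>A. ev n (g a) f j)"
  by (induction A rule: infinite_finite_induct) (auto simp: ev_add)

lemma ev_single: "ev n (sg a c) f j = c * f (shift n a j)"
  by (simp add: ev_def)

lemma poly_expand: "P = (\<Sum>a\<in>ks P. sg a (lk P a))"
proof (rule poly_mapping_eqI)
  fix k
  have "lk (\<Sum>a\<in>ks P. sg a (lk P a)) k = (\<Sum>a\<in>ks P. if a = k then lk P a else 0)"
    by (simp add: lookup_sum lookup_single when_def)
  also have "\<dots> = lk P k" by (simp add: in_keys_iff)
  finally show "lk P k = lk (\<Sum>a\<in>ks P. sg a (lk P a)) k" by simp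
qed

lemma ev_mult: "ev n (P * Q) f j = ev n P (ev n Q f) j"
proof -
  have "P * Q = (\<Sum>a\<in>ks P. \<Sum>b\<in>ks Q. sg (a + b) (lk P a * lk Q b))"
  proof -
    have "P * Q = (\<Sum>a\<in>ks P. sg a (lk P a)) * (\<Sum>b\<in>ks Q. sg b (lk Q b))"
      by (rule arg_cong2[where f="(*)"]) (rule poly_expand)+
    then show ?thesis by (simp add: sum_distrib_left sum_distrib_right mult_single, subst sum.swap, simp)
  qed
  then have "ev n (P * Q) f j = (\<Sum>a\<in>ks P. \<Sum>b\<in>ks Q. lk P a * lk Q b * f (shift n b (shift n a j)))"
    by (simp add: ev_sum ev_single shift_add)
  also have "\<dots> = ev n P (ev n Q f) j"
    by (simp add: ev_def sum_distrib_left mult.assoc)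
  finally show ?thesis .
qed

lemma ev_one[simp]: "ev n 1 f j = f j"
  by (metis ev_single mult_1 shift_0 single_one)




definition esym :: "(nat \<Rightarrow> 'a::comm_ring_1) \<Rightarrow> nat \<Rightarrow> nat \<Rightarrow> 'a" where
  "esym x r k = (\<Sum>S\<in>{S. S \<subseteq> {1..r} \<and> card S = k}. prod x S)"

definition psum :: "(nat \<Rightarrow> 'a::comm_ring_1) \<Rightarrow> nat \<Rightarrow> nat \<Rightarrow> 'a" where
  "psum x r i = (\<Sum>s\<in>{1..r}. x s ^ i)"

lemma esym_0[simp]: "esym x r 0 = 1"
proof -
  have e: "{S. S \<subseteq> {1..r} \<and> card S = 0} = {{}}"
    by (auto dest: finite_subset)
  show ?thesis unfolding esym_def e by simp
qed

lemma esym_zero_Suc[simp]: "esym x 0 (Suc k) = 0"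
proof -
  have e: "{S. S \<subseteq> {1..0::nat} \<and> card S = Suc k} = {}" by auto
  show ?thesis unfolding esym_def e by simp
qed

lemma esym_big: "k > r \<Longrightarrow> esym x r k = 0"
proof -
  assume "k > r"
  have e: "{S. S \<subseteq> {1..r} \<and> card S = k} = {}"
  proof (rule ccontr)
    assume "\<not> ?thesis"
    then obtain S where "S \<subseteq> {1..r}" "card S = k" by auto
    then have "card S \<le> r" using card_mono[of "{1..r}" S] by auto
    with \<open>k > r\<close> \<open>card S = k\<close> show False by simp
  qed
  show ?thesis unfolding esym_def e by simp
qed

lemma esym_Suc_Suc: "esym x (Suc r) (Suc k) = esym x r (Suc k) + x (Suc r) * esym x r k"
proof -
  let ?A = "{S. S \<subseteq> {1..r} \<and> card S = Suc k}"
  let ?C = "{S. S \<subseteq> {1..r} \<and> card S = k}"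
  let ?B = "insert (Suc r) ` ?C"
  have fin: "finite {S. S \<subseteq> {1..n::nat} \<and> card S = m}" for n m
    by (rule finite_subset[of _ "Pow {1..n}"]) auto
  have eq: "{S. S \<subseteq> {1..Suc r} \<and> card S = Suc k} = ?A \<union> ?B"
  proof (intro equalityI subsetI)
    fix S assume S: "S \<in> {S. S \<subseteq> {1..Suc r} \<and> card S = Suc k}"
    show "S \<in> ?A \<union> ?B"
    proof (cases "Suc r \<in> S")
      case True
      then have "S = insert (Suc r) (S - {Suc r})" by auto
      moreover have "S - {Suc r} \<in> ?C" using S True
        by (auto simp: card_Diff_singleton dest: finite_subset)
      ultimately show ?thesis by blast
    next
      case False
      then have "S \<subseteq> {1..r}" using S by (auto simp: le_Suc_eq)
      then show ?thesis using S by auto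
    qed
  next
    fix S assume "S \<in> ?A \<union> ?B"
    then show "S \<in> {S. S \<subseteq> {1..Suc r} \<and> card S = Suc k}"
    proof
      assume "S \<in> ?A" then show ?thesis by auto
    next
      assume "S \<in> ?B"
      then obtain T where T: "T \<subseteq> {1..r}" "card T = k" "S = insert (Suc r) T" by auto
      have "finite T" using T(1) finite_subset by blast
      moreover have "Suc r \<notin> T" using T(1) by auto
      ultimately show ?thesis using T by auto
    qed
  qed
  have disj: "?A \<inter> ?B = {}" by auto
  have inj: "inj_on (insert (Suc r)) ?C"
  proof (rule inj_onI)
    fix X Y assume XY: "X \<in> ?C" "Y \<in> ?C" "insert (Suc r) X = insert (Suc r) Y"
    then have "Suc r \<notin> X" "Suc r \<notin> Y" by auto
    then show "X = Y" by (metis Diff_insert_absorb XY(3))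
  qed
  have "esym x (Suc r) (Suc k) = sum (prod x) ?A + sum (prod x) ?B"
    unfolding esym_def eq by (rule sum.union_disjoint) (use fin disj in auto)
  also have "sum (prod x) ?B = sum (prod x \<circ> insert (Suc r)) ?C"
    by (rule sum.reindex[OF inj])
  also have "\<dots> = sum (\<lambda>T. x (Suc r) * prod x T) ?C"
  proof (rule sum.cong)
    fix T assume "T \<in> ?C"
    then have "finite T" "Suc r \<notin> T" using finite_subset by auto
    then show "(prod x \<circ> insert (Suc r)) T = x (Suc r) * prod x T" by simp
  qed simp
  finally show ?thesis by (simp add: esym_def sum_distrib_left)
qed

lemma esym_Suc: "esym x (Suc r) j = esym x r j + (if j = 0 then 0 else x (Suc r) * esym x r (j - 1))"
  by (cases j) (auto simp: esym_Suc_Suc)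

lemma psum_Suc: "psum x (Suc r) i = psum x r i + x (Suc r) ^ i"
  by (simp add: psum_def)

lemma psum_0[simp]: "psum x 0 i = 0"
  by (simp add: psum_def)

lemma telescope:
  "(\<Sum>i\<le>m. (-1)^i * esym x (Suc r) (m - i) * x (Suc r) ^ Suc i) = x (Suc r) * esym x r m"
proof (induction m)
  case 0 then show ?case by simp
next
  case (Suc m)
  let ?y = "x (Suc r)"
  have "(\<Sum>i\<le>Suc m. (-1)^i * esym x (Suc r) (Suc m - i) * ?y ^ Suc i)
      = esym x (Suc r) (Suc m) * ?y + (\<Sum>i\<le>m. (-1)^Suc i * esym x (Suc r) (m - i) * ?y ^ Suc (Suc i))"
    by (subst sum.atMost_Suc_shift) simp
  also have "(\<Sum>i\<le>m. (-1)^Suc i * esym x (Suc r) (m - i) * ?y ^ Suc (Suc i))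
      = - ?y * (\<Sum>i\<le>m. (-1)^i * esym x (Suc r) (m - i) * ?y ^ Suc i)"
    by (simp add: sum_distrib_left algebra_simps)
  also have "\<dots> = - ?y * (?y * esym x r m)" using Suc by simp
  finally show ?case by (simp add: esym_Suc_Suc algebra_simps)
qed

lemma newton:
  "of_nat (Suc m) * esym x r (Suc m) = (\<Sum>i\<le>m. (-1)^i * esym x r (m - i) * psum x r (Suc i))"
proof (induction r arbitrary: m)
  case 0 then show ?case by simp
next
  case (Suc r)
  let ?y = "x (Suc r)"
  let ?e = "esym x r" and ?p = "psum x r"
  have split: "(\<Sum>i\<le>m. (-1)^i * esym x (Suc r) (m - i) * psum x (Suc r) (Suc i))
     = (\<Sum>i\<le>m. (-1)^i * ?e (m - i) * ?p (Suc i))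
     + (\<Sum>i\<le>m. (-1)^i * (if m - i = 0 then 0 else ?y * ?e (m - i - 1)) * ?p (Suc i))
     + (\<Sum>i\<le>m. (-1)^i * esym x (Suc r) (m - i) * ?y ^ Suc i)"
    by (simp add: esym_Suc psum_Suc algebra_simps sum.distrib)
  have second: "(\<Sum>i\<le>m. (-1)^i * (if m - i = 0 then 0 else ?y * ?e (m - i - 1)) * ?p (Suc i))
      = ?y * of_nat m * ?e m"
  proof (cases m)
    case 0 then show ?thesis by simp
  next
    case (Suc m')
    have "(\<Sum>i\<le>m. (-1)^i * (if m - i = 0 then 0 else ?y * ?e (m - i - 1)) * ?p (Suc i))
        = (\<Sum>i\<le>m'. (-1)^i * (?y * ?e (m' - i)) * ?p (Suc i))"
      unfolding Suc by (subst sum.atMost_Suc) (auto intro!: sum.cong simp: Suc_diff_le)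
    also have "\<dots> = ?y * (\<Sum>i\<le>m'. (-1)^i * ?e (m' - i) * ?p (Suc i))"
      by (simp add: sum_distrib_left algebra_simps)
    also have "\<dots> = ?y * of_nat m * ?e m" by (subst Suc.IH[of m', symmetric]) (simp add: Suc mult.assoc)
    finally show ?thesis .
  qed
  show ?case
    unfolding split second telescope Suc.IH[symmetric]
    by (simp add: esym_Suc_Suc algebra_simps)
qed




definition ringlike :: "L set \<Rightarrow> bool" where
  "ringlike S \<longleftrightarrow> 1 \<in> S \<and> (\<forall>P\<in>S. \<forall>Q\<in>S. P + Q \<in> S \<and> P * Q \<in> S) \<and> (\<forall>c. \<forall>P\<in>S. sg 0 c * P \<in> S)"

context fixes S assumes rl: "ringlike S"
begin

lemma rl_one: "1 \<in> S" using rl by (simp add: ringlike_def)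
lemma rl_add: "P \<in> S \<Longrightarrow> Q \<in> S \<Longrightarrow> P + Q \<in> S" using rl by (simp add: ringlike_def)
lemma rl_mult: "P \<in> S \<Longrightarrow> Q \<in> S \<Longrightarrow> P * Q \<in> S" using rl by (simp add: ringlike_def)
lemma rl_smult: "P \<in> S \<Longrightarrow> sg 0 c * P \<in> S" using rl by (simp add: ringlike_def)
lemma rl_zero: "0 \<in> S" using rl_smult[OF rl_one, of 0] by simp
lemma rl_neg: "P \<in> S \<Longrightarrow> - P \<in> S"
proof -
  assume "P \<in> S"
  moreover have "sg 0 (-1) = (-1 :: L)" by (simp add: single_uminus)
  ultimately show ?thesis using rl_smult[of P "-1"] by simp
qed
lemma rl_diff: "P \<in> S \<Longrightarrow> Q \<in> S \<Longrightarrow> P - Q \<in> S"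
  using rl_add rl_neg by (metis diff_conv_add_uminus)
lemma rl_sum: "(\<And>a. a \<in> A \<Longrightarrow> g a \<in> S) \<Longrightarrow> sum g A \<in> S"
  by (induction A rule: infinite_finite_induct) (auto intro: rl_zero rl_add)
lemma rl_prod: "(\<And>a. a \<in> A \<Longrightarrow> g a \<in> S) \<Longrightarrow> prod g A \<in> S"
  by (induction A rule: infinite_finite_induct) (auto intro: rl_one rl_mult)
lemma rl_pow: "P \<in> S \<Longrightarrow> P ^ k \<in> S"
  by (induction k) (auto intro: rl_one rl_mult)
lemma rl_ofnat: "P \<in> S \<Longrightarrow> of_nat k * P \<in> S"
  using rl_smult[of P "of_nat k"] by (simp flip: single_of_nat)
lemma rl_sign: "P \<in> S \<Longrightarrow> (-1)^i * P \<in> S"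
  by (intro rl_mult rl_pow rl_neg rl_one)

lemma e_from_p:
  assumes "\<And>i. psum x r (Suc i) \<in> S"
  shows "esym x r k \<in> S"
proof (induction k rule: less_induct)
  case (less k)
  show ?case
  proof (cases k)
    case 0 then show ?thesis by (simp add: rl_one)
  next
    case (Suc m)
    have inv: "sg 0 (1 / of_nat (Suc m)) * of_nat (Suc m) = (1::L)"
      by (simp flip: single_of_nat add: mult_single del: of_nat_Suc)
    have "esym x r k = sg 0 (1 / of_nat (Suc m)) * (of_nat (Suc m) * esym x r (Suc m))"
      by (simp only: Suc mult.assoc[symmetric] inv mult_1)
    also have "\<dots> = sg 0 (1 / of_nat (Suc m)) * (\<Sum>i\<le>m. (-1)^i * esym x r (m - i) * psum x r (Suc i))"
      by (simp only: newton)
    finally show ?thesis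
      using less Suc by (auto intro!: rl_smult rl_sum rl_mult rl_sign assms simp: mult.assoc)
  qed
qed

lemma p_from_e:
  assumes "\<And>k. esym x r k \<in> S"
  shows "psum x r (Suc m) \<in> S"
proof (induction m rule: less_induct)
  case (less m)
  define T where "T = (\<Sum>i<m. (-1)^i * esym x r (m - i) * psum x r (Suc i))"
  have N: "of_nat (Suc m) * esym x r (Suc m) = T + (-1)^m * psum x r (Suc m)"
    unfolding newton T_def by (simp add: sum.atMost_Suc lessThan_Suc_atMost[symmetric])
  have sq: "((-1)::L)^m * (-1)^m = 1" by (simp flip: power_mult_distrib)
  have "psum x r (Suc m) = (-1)^m * (of_nat (Suc m) * esym x r (Suc m) - T)"
    unfolding N by (simp add: algebra_simps sq flip: mult.assoc)
  moreover have "T \<in> S" unfolding T_def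
    using less by (auto intro!: rl_sum rl_mult rl_sign assms simp: mult.assoc)
  moreover have "of_nat (Suc m) * esym x r (Suc m) \<in> S" by (rule rl_ofnat, rule assms)
  ultimately show ?case by (metis rl_sign rl_diff)
qed

end



definition X :: "nat \<Rightarrow> L" where "X s = sg (sg s 1) 1"
definition Xi :: "nat \<Rightarrow> L" where "Xi s = sg (sg s (-1)) 1"
definition chi :: "nat set \<Rightarrow> K" where "chi S = (\<Sum>s\<in>S. sg s 1)"
definition Dk :: "nat \<Rightarrow> int \<Rightarrow> K" where "Dk r k = (\<Sum>s\<in>{1..r}. sg s k)"
definition Ez :: "nat \<Rightarrow> int \<Rightarrow> L" where "Ez r k = sg (Dk r k) 1"
definition Mon :: "nat \<Rightarrow> (nat \<Rightarrow> nat) \<times> int \<Rightarrow> L" where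
  "Mon r x = (\<Prod>s\<in>{1..<r}. esym X r s ^ fst x s) * Ez r (snd x)"

lemma prod_X: "prod X S = sg (chi S) 1"
  unfolding chi_def X_def
  by (induction S rule: infinite_finite_induct) (auto simp: mult_single)

lemma prod_Xi: "prod Xi S = sg (- chi S) 1"
  unfolding chi_def Xi_def
  by (induction S rule: infinite_finite_induct) (auto simp: mult_single single_uminus)

lemma esym_top: "esym x r r = prod x {1..r}"
proof -
  have e: "{S. S \<subseteq> {1..r} \<and> card S = r} = {{1..r}}"
  proof (intro equalityI subsetI)
    fix S assume "S \<in> {S. S \<subseteq> {1..r} \<and> card S = r}"
    then have "S \<subseteq> {1..r}" "card S = card {1..r}" by auto
    then have "S = {1..r}" using card_subset_eq[of "{1..r}" S] by auto
    then show "S \<in> {{1..r}}" by simp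
  qed auto
  show ?thesis unfolding esym_def e by simp
qed

lemma E_top: "esym X r r = Ez r 1"
  by (simp add: esym_top prod_X Ez_def Dk_def chi_def)

lemma Ei_top: "esym Xi r r = Ez r (-1)"
  by (simp add: esym_top prod_Xi Ez_def Dk_def chi_def single_uminus sum_negf)

lemma Dk_add: "Dk r a + Dk r b = Dk r (a + b)"
  by (simp add: Dk_def single_add sum.distrib)

lemma Ez_mult: "Ez r a * Ez r b = Ez r (a + b)"
  by (simp add: Ez_def mult_single Dk_add)

lemma Dk_0[simp]: "Dk r 0 = 0" by (simp add: Dk_def)
lemma Ez_0[simp]: "Ez r 0 = 1" by (simp add: Ez_def)

lemma Ez_pow: "Ez r k ^ m = Ez r (int m * k)"
  by (induction m) (auto simp: Ez_mult algebra_simps)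

lemma ev_mult_fun: "ev n (P * Q) = ev n P \<circ> ev n Q"
  by (auto simp: fun_eq_iff ev_mult)

lemma ev_one_fun: "ev n 1 = id"
  by (auto simp: fun_eq_iff)

lemma ev_pow: "ev n (P ^ m) = ev n P ^^ m"
  by (induction m) (auto simp: ev_one_fun ev_mult_fun)

lemma ev_prod: "ev n (prod g S) = op_prod (\<lambda>s. ev n (g s)) S"
proof -
  have "prod g S = prod_list (map g (sorted_list_of_set S))"
    by (cases "finite S") (auto simp: prod.distinct_set_conv_list[symmetric])
  moreover have "ev n (prod_list (map g xs)) = foldr (\<circ>) (map (\<lambda>s. ev n (g s)) xs) id" for xs
    by (induction xs) (auto simp: ev_one_fun ev_mult_fun)
  ultimately show ?thesis by (simp add: op_prod_def)
qed

lemma op_prod_cong: "(\<And>s. s \<in> S \<Longrightarrow> F s = G s) \<Longrightarrow> op_prod F S = op_prod G S"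
  unfolding op_prod_def
  by (cases "finite S") (auto intro!: arg_cong[where f="\<lambda>xs. foldr (\<circ>) xs id"])

lemma ev_X: "s \<ge> 1 \<Longrightarrow> ev n (X s) = phi n s"
proof -
  assume s: "s \<ge> 1"
  have "shift n (sg s 1) j = j[s - 1 := j ! (s - 1) + int n]" for j
  proof (rule nth_equalityI)
    show "length (shift n (sg s 1) j) = length (j[s - 1 := j ! (s - 1) + int n])" by simp
    fix i assume "i < length (shift n (sg s 1) j)"
    then show "shift n (sg s 1) j ! i = j[s - 1 := j ! (s - 1) + int n] ! i"
      using s by (auto simp: lookup_single when_def nth_list_update)
  qed
  then show ?thesis unfolding X_def phi_def by (simp add: fun_eq_iff ev_single)
qed

lemma ev_Xi: "s \<ge> 1 \<Longrightarrow> ev n (Xi s) = phi_inv n s"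
proof -
  assume s: "s \<ge> 1"
  have "shift n (sg s (-1)) j = j[s - 1 := j ! (s - 1) - int n]" for j
  proof (rule nth_equalityI)
    show "length (shift n (sg s (-1)) j) = length (j[s - 1 := j ! (s - 1) - int n])" by simp
    fix i assume "i < length (shift n (sg s (-1)) j)"
    then show "shift n (sg s (-1)) j ! i = j[s - 1 := j ! (s - 1) - int n] ! i"
      using s by (auto simp: lookup_single when_def nth_list_update)
  qed
  then show ?thesis unfolding Xi_def phi_inv_def by (simp add: fun_eq_iff ev_single)
qed

lemma ev_E: "sigma n r k = ev n (esym X r k)"
proof -
  have "op_prod (phi n) S = ev n (prod X S)" if "S \<subseteq> {1..r}" for S
    unfolding ev_prod using that by (auto intro!: op_prod_cong simp: ev_X)
  then show ?thesis
    unfolding sigma_def esym_def op_sum_def by (auto simp: fun_eq_iff ev_sum)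
qed

lemma ev_Ei: "sigma_r_inv n r = ev n (esym Xi r r)"
  unfolding sigma_r_inv_def esym_top ev_prod by (auto intro!: op_prod_cong simp: ev_Xi)

lemma ev_Ez: "sigma_r_zpow n r k = ev n (Ez r k)"
proof (cases "k \<ge> 0")
  case True
  then have "Ez r k = Ez r 1 ^ nat k" by (simp add: Ez_pow)
  then show ?thesis using True by (simp add: sigma_r_zpow_def ev_pow ev_E E_top)
next
  case False
  then have "Ez r k = Ez r (-1) ^ nat (-k)" by (simp add: Ez_pow)
  then show ?thesis using False by (simp add: sigma_r_zpow_def ev_pow ev_Ei Ei_top)
qed

lemma ev_Mon: "sigma_mon n r x = ev n (Mon r x)"
  unfolding sigma_mon_def Mon_def ev_mult_fun ev_prod ev_Ez
  by (auto intro!: op_prod_cong simp: ev_pow ev_E)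

lemma ev_p: "p_op n r m = ev n (psum X r m)"
  unfolding p_op_def psum_def op_sum_def by (auto simp: fun_eq_iff ev_sum ev_pow ev_X)

lemma ev_q: "q_op n r m = ev n (psum Xi r m)"
  unfolding q_op_def psum_def op_sum_def by (auto simp: fun_eq_iff ev_sum ev_pow ev_Xi)

lemma ev_smult: "ev n (sg 0 c * P) = op_smult c (ev n P)"
  by (auto simp: fun_eq_iff ev_mult ev_single op_smult_def)

lemma ev_add_fun: "ev n (P + Q) = op_add (ev n P) (ev n Q)"
  by (auto simp: fun_eq_iff ev_add op_add_def)

inductive_set ZL :: "nat \<Rightarrow> L set" for r where
  "m \<ge> 1 \<Longrightarrow> psum X r m \<in> ZL r"
| "m \<ge> 1 \<Longrightarrow> psum Xi r m \<in> ZL r"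
| "1 \<in> ZL r"
| "P \<in> ZL r \<Longrightarrow> Q \<in> ZL r \<Longrightarrow> P + Q \<in> ZL r"
| "P \<in> ZL r \<Longrightarrow> Q \<in> ZL r \<Longrightarrow> P * Q \<in> ZL r"
| "P \<in> ZL r \<Longrightarrow> sg 0 c * P \<in> ZL r"

lemma ZL_ringlike: "ringlike (ZL r)"
  unfolding ringlike_def by (auto intro: ZL.intros)

lemma ZL_Zalg: "P \<in> ZL r \<Longrightarrow> ev n P \<in> Zalg n r"
proof (induction rule: ZL.induct)
  case (1 m) then show ?case by (simp flip: ev_p add: Zalg.gen_p)
next
  case (2 m) then show ?case by (simp flip: ev_q add: Zalg.gen_q)
next
  case 3 then show ?case by (simp only: ev_one_fun Zalg.unit)
next
  case (4 P Q) then show ?case by (simp only: ev_add_fun Zalg.add)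
next
  case (5 P Q) then show ?case by (simp only: ev_mult_fun Zalg.comp)
next
  case (6 P c) then show ?case by (simp only: ev_smult Zalg.smult)
qed

lemma Mon_ZL: "Mon r x \<in> ZL r"
proof -
  note rl = ZL_ringlike[of r]
  have E: "esym X r k \<in> ZL r" for k
    by (rule e_from_p[OF rl]) (auto intro: ZL.intros)
  have Ei: "esym Xi r k \<in> ZL r" for k
    by (rule e_from_p[OF rl]) (auto intro: ZL.intros)
  have Ez: "Ez r k \<in> ZL r" for k
  proof (cases "k \<ge> 0")
    case True
    then have "Ez r k = esym X r r ^ nat k" by (simp add: Ez_pow E_top)
    then show ?thesis using rl_pow[OF rl E] by simp
  next
    case False
    then have "Ez r k = esym Xi r r ^ nat (-k)" by (simp add: Ez_pow Ei_top)
    then show ?thesis using rl_pow[OF rl Ei] by simp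
  qed
  show ?thesis unfolding Mon_def
    by (intro rl_mult[OF rl] rl_prod[OF rl] rl_pow[OF rl] E Ez)
qed

lemma part1: "sigma_mon n r x \<in> Zalg n r"
  by (simp add: ev_Mon ZL_Zalg Mon_ZL)




definition madd :: "(nat \<Rightarrow> nat) \<times> int \<Rightarrow> (nat \<Rightarrow> nat) \<times> int \<Rightarrow> (nat \<Rightarrow> nat) \<times> int" where
  "madd x y = (\<lambda>s. fst x s + fst y s, snd x + snd y)"

lemma madd_idx: "x \<in> mon_idx r \<Longrightarrow> y \<in> mon_idx r \<Longrightarrow> madd x y \<in> mon_idx r"
  by (auto simp: mon_idx_def madd_def)

lemma Mon_mult: "Mon r x * Mon r y = Mon r (madd x y)"
  unfolding Mon_def madd_def
  by (simp add: power_add prod.distrib Ez_mult[symmetric] ac_simps)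

lemma Mon_one: "Mon r (\<lambda>_. 0, 0) = 1"
  by (simp add: Mon_def)

lemma zero_idx: "(\<lambda>_. 0, 0) \<in> mon_idx r"
  by (simp add: mon_idx_def)

inductive_set SpanL :: "nat \<Rightarrow> L set" for r where
  sp_mon: "x \<in> mon_idx r \<Longrightarrow> Mon r x \<in> SpanL r"
| sp_zero: "0 \<in> SpanL r"
| sp_add: "P \<in> SpanL r \<Longrightarrow> Q \<in> SpanL r \<Longrightarrow> P + Q \<in> SpanL r"
| sp_smult: "P \<in> SpanL r \<Longrightarrow> sg 0 c * P \<in> SpanL r"

lemma Mon_mult_span: "Q \<in> SpanL r \<Longrightarrow> x \<in> mon_idx r \<Longrightarrow> Mon r x * Q \<in> SpanL r"
proof (induction Q rule: SpanL.induct)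
  case (sp_mon y) then show ?case by (simp add: Mon_mult madd_idx SpanL.sp_mon)
next
  case sp_zero then show ?case by (simp add: SpanL.sp_zero)
next
  case (sp_add P Q) then show ?case by (simp add: distrib_left SpanL.sp_add)
next
  case (sp_smult P c)
  have "Mon r x * (sg 0 c * P) = sg 0 c * (Mon r x * P)" by (simp add: ac_simps)
  then show ?case using sp_smult by (metis SpanL.sp_smult)
qed

lemma span_mult: "P \<in> SpanL r \<Longrightarrow> Q \<in> SpanL r \<Longrightarrow> P * Q \<in> SpanL r"
proof (induction P rule: SpanL.induct)
  case (sp_mon x) then show ?case by (simp add: Mon_mult_span)
next
  case sp_zero then show ?case by (simp add: SpanL.sp_zero)
next
  case (sp_add P1 P2) then show ?case by (simp add: distrib_right SpanL.sp_add)
next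
  case (sp_smult P c) then show ?case by (simp add: mult.assoc SpanL.sp_smult)
qed

lemma span_ringlike: "ringlike (SpanL r)"
  unfolding ringlike_def
  using SpanL.sp_mon[OF zero_idx, of r] by (auto simp: Mon_one span_mult intro: SpanL.intros)

lemma E_span: "esym X r j \<in> SpanL r"
proof -
  consider "j = 0" | "1 \<le> j" "j < r" | "j = r" | "j > r" by linarith
  then show ?thesis
  proof cases
    case 1 then show ?thesis using rl_one[OF span_ringlike] by simp
  next
    case 2
    let ?x = "(\<lambda>s. if s = j then 1 else 0, 0) :: (nat \<Rightarrow> nat) \<times> int"
    have "?x \<in> mon_idx r" using 2 by (auto simp: mon_idx_def)
    moreover have "Mon r ?x = esym X r j"
    proof -
      have "(\<Prod>s\<in>{1..<r}. esym X r s ^ fst ?x s) = (\<Prod>s\<in>{1..<r}. if s = j then esym X r s else 1)"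
        by (rule prod.cong) auto
      also have "\<dots> = esym X r j" using 2 by (simp add: prod.delta)
      finally show ?thesis by (simp add: Mon_def)
    qed
    ultimately show ?thesis by (metis SpanL.sp_mon)
  next
    case 3
    have "Mon r (\<lambda>_. 0, 1) = esym X r j" using 3 by (simp add: Mon_def E_top)
    moreover have "(\<lambda>_. 0, 1) \<in> mon_idx r" by (simp add: mon_idx_def)
    ultimately show ?thesis by (metis SpanL.sp_mon)
  next
    case 4 then show ?thesis by (simp add: esym_big SpanL.sp_zero)
  qed
qed

lemma X_Xi: "X s * Xi s = 1"
  by (simp add: X_def Xi_def mult_single single_uminus flip: single_add)

lemma prod_Xi_compl:
  assumes "S \<subseteq> {1..r}"
  shows "prod Xi S = Ez r (-1) * prod X ({1..r} - S)"
proof -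
  have fin: "finite S" using assms finite_subset by blast
  have all: "prod X {1..r} = prod X S * prod X ({1..r} - S)"
    using prod.subset_diff[OF assms, of X] by (simp add: mult.commute)
  have inv1: "Ez r (-1) * prod X {1..r} = 1"
    by (simp add: E_top[symmetric] esym_top[symmetric] Ez_mult[symmetric] flip: Ei_top)
       (simp add: esym_top prod.distrib[symmetric] X_Xi mult.commute)
  have inv2: "prod Xi S * prod X S = 1"
    by (simp add: prod.distrib[symmetric] X_Xi mult.commute)
  have "prod Xi S = prod Xi S * (Ez r (-1) * prod X {1..r})" using inv1 by simp
  also have "\<dots> = (prod Xi S * prod X S) * (Ez r (-1) * prod X ({1..r} - S))"
    unfolding all by (simp add: ac_simps)
  also have "\<dots> = Ez r (-1) * prod X ({1..r} - S)" using inv2 by simp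
  finally show ?thesis .
qed

lemma Ei_span: "esym Xi r j \<in> SpanL r"
proof (cases "j \<le> r")
  case False then show ?thesis by (simp add: esym_big SpanL.sp_zero)
next
  case True
  have "esym Xi r j = (\<Sum>S\<in>{S. S \<subseteq> {1..r} \<and> card S = j}. Ez r (-1) * prod X ({1..r} - S))"
    unfolding esym_def by (rule sum.cong) (auto simp: prod_Xi_compl)
  also have "\<dots> = Ez r (-1) * (\<Sum>T\<in>{T. T \<subseteq> {1..r} \<and> card T = r - j}. prod X T)"
  proof -
    have "(\<Sum>S\<in>{S. S \<subseteq> {1..r} \<and> card S = j}. prod X ({1..r} - S))
        = (\<Sum>T\<in>{T. T \<subseteq> {1..r} \<and> card T = r - j}. prod X T)"
    proof (rule sum.reindex_bij_witness[where i="\<lambda>T. {1..r} - T" and j="\<lambda>S. {1..r} - S"])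
      fix S assume "S \<in> {S. S \<subseteq> {1..r} \<and> card S = j}"
      then show "{1..r} - ({1..r} - S) = S" "{1..r} - S \<in> {T. T \<subseteq> {1..r} \<and> card T = r - j}"
        by (auto simp: card_Diff_subset finite_subset)
    next
      fix T assume T: "T \<in> {T. T \<subseteq> {1..r} \<and> card T = r - j}"
      then show "{1..r} - ({1..r} - T) = T" by auto
      have "card T \<le> r" using T card_mono[of "{1..r}" T] by auto
      then show "{1..r} - T \<in> {S. S \<subseteq> {1..r} \<and> card S = j}"
        using T True by (auto simp: card_Diff_subset finite_subset)
    qed simp
    then show ?thesis by (simp add: sum_distrib_left[symmetric])
  qed
  also have "\<dots> = Ez r (-1) * esym X r (r - j)" by (simp add: esym_def)
  finally show ?thesis
  proof -
    have "Mon r (\<lambda>_. 0, -1) = Ez r (-1)" by (simp add: Mon_def)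
    moreover have "(\<lambda>_. 0, -1) \<in> mon_idx r" by (simp add: mon_idx_def)
    ultimately have "Ez r (-1) \<in> SpanL r" by (metis SpanL.sp_mon)
    then show "esym Xi r j = Ez r (-1) * esym X r (r - j) \<Longrightarrow> esym Xi r j \<in> SpanL r"
      using span_mult E_span by simp
  qed
qed

lemma P_span: "psum X r (Suc m) \<in> SpanL r"
  by (rule p_from_e[OF span_ringlike E_span])

lemma Q_span: "psum Xi r (Suc m) \<in> SpanL r"
  by (rule p_from_e[OF span_ringlike Ei_span])




lemma shift_neg: "shift n (- a) (shift n a j) = j"
  by (metis add.right_inverse shift_0 shift_add)

lemma ev_Omega:
  assumes "f \<in> Omega r"
  shows "ev n P f \<in> Omega r"
proof -
  let ?Sf = "{l. f l \<noteq> 0}"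
  have "{j. ev n P f j \<noteq> 0} \<subseteq> (\<Union>a\<in>ks P. shift n (- a) ` ?Sf)"
  proof
    fix j assume "j \<in> {j. ev n P f j \<noteq> 0}"
    then obtain a where "a \<in> ks P" "f (shift n a j) \<noteq> 0"
      unfolding ev_def by (auto elim: sum.not_neutral_contains_not_neutral)
    then show "j \<in> (\<Union>a\<in>ks P. shift n (- a) ` ?Sf)"
      by (auto intro!: bexI[of _ a] image_eqI[of _ _ "shift n a j"] simp: shift_neg)
  qed
  moreover have "finite (\<Union>a\<in>ks P. shift n (- a) ` ?Sf)"
    using assms by (simp add: Omega_def)
  moreover have "length j = r" if "ev n P f j \<noteq> 0" for j
  proof -
    from that obtain a where "lk P a * f (shift n a j) \<noteq> 0"
      unfolding ev_def by (metis (no_types, lifting) sum.not_neutral_contains_not_neutral)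
    then have "f (shift n a j) \<noteq> 0" by auto
    then show ?thesis using assms by (auto simp: Omega_def)
  qed
  ultimately show ?thesis unfolding Omega_def by (auto intro: finite_subset)
qed

lemma Zalg_span:
  assumes "A \<in> Zalg n r"
  shows "\<exists>P\<in>SpanL r. \<forall>f\<in>Omega r. A f = ev n P f"
  using assms
proof (induction rule: Zalg.induct)
  case (gen_p m)
  then obtain m' where "m = Suc m'" by (cases m) auto
  then show ?case using P_span[of r m'] by (auto simp: ev_p)
next
  case (gen_q m)
  then obtain m' where "m = Suc m'" by (cases m) auto
  then show ?case using Q_span[of r m'] by (auto simp: ev_q)
next
  case unit
  have "\<forall>f\<in>Omega r. id f = ev n 1 f" by (simp add: ev_one_fun)
  then show ?case using rl_one[OF span_ringlike, of r] by blast
next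
  case (add A B)
  then obtain P Q where "P \<in> SpanL r" "Q \<in> SpanL r" "\<forall>f\<in>Omega r. A f = ev n P f" "\<forall>f\<in>Omega r. B f = ev n Q f"
    by blast
  then show ?case
    by (intro bexI[of _ "P + Q"]) (auto simp: ev_add_fun op_add_def intro: SpanL.sp_add)
next
  case (smult A c)
  then obtain P where "P \<in> SpanL r" "\<forall>f\<in>Omega r. A f = ev n P f" by blast
  then show ?case
    by (intro bexI[of _ "sg 0 c * P"]) (auto simp: ev_smult op_smult_def intro: SpanL.sp_smult)
next
  case (comp A B)
  then obtain P Q where "P \<in> SpanL r" "Q \<in> SpanL r" "\<forall>f\<in>Omega r. A f = ev n P f" "\<forall>f\<in>Omega r. B f = ev n Q f"
    by blast
  then show ?case
    by (intro bexI[of _ "P * Q"]) (auto simp: ev_mult_fun ev_Omega intro: span_mult)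
qed

lemma span_repr:
  assumes "P \<in> SpanL r"
  shows "\<exists>F c. finite F \<and> F \<subseteq> mon_idx r \<and> P = (\<Sum>x\<in>F. sg 0 (c x) * Mon r x)"
  using assms
proof (induction rule: SpanL.induct)
  case (sp_mon x)
  then show ?case by (intro exI[of _ "{x}"] exI[of _ "\<lambda>_. 1"]) simp
next
  case sp_zero
  then show ?case by (intro exI[of _ "{}"]) simp
next
  case (sp_add P Q)
  then obtain F1 c1 F2 c2 where h: "finite F1" "F1 \<subseteq> mon_idx r" "P = (\<Sum>x\<in>F1. sg 0 (c1 x) * Mon r x)"
    "finite F2" "F2 \<subseteq> mon_idx r" "Q = (\<Sum>x\<in>F2. sg 0 (c2 x) * Mon r x)" by blast
  define d1 where "d1 x = (if x \<in> F1 then c1 x else 0)" for x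
  define d2 where "d2 x = (if x \<in> F2 then c2 x else 0)" for x
  have e1: "P = (\<Sum>x\<in>F1 \<union> F2. sg 0 (d1 x) * Mon r x)"
    unfolding h(3) d1_def by (rule sum.mono_neutral_cong_left) (use h in auto)
  have e2: "Q = (\<Sum>x\<in>F1 \<union> F2. sg 0 (d2 x) * Mon r x)"
    unfolding h(6) d2_def by (rule sum.mono_neutral_cong_left) (use h in auto)
  show ?case
    by (intro exI[of _ "F1 \<union> F2"] exI[of _ "\<lambda>x. d1 x + d2 x"])
       (use h in \<open>auto simp: e1 e2 single_add distrib_right sum.distrib\<close>)
next
  case (sp_smult P c)
  then obtain F c1 where h: "finite F" "F \<subseteq> mon_idx r" "P = (\<Sum>x\<in>F. sg 0 (c1 x) * Mon r x)" by blast
  show ?case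
    by (intro exI[of _ F] exI[of _ "\<lambda>x. c * c1 x"])
       (use h in \<open>auto simp: sum_distrib_left mult_single mult.assoc[symmetric]\<close>)
qed

lemma part3:
  assumes "A \<in> Zalg n r"
  shows "\<exists>F c. finite F \<and> F \<subseteq> mon_idx r \<and>
          (\<forall>f\<in>Omega r. \<forall>j. A f j = (\<Sum>x\<in>F. c x * sigma_mon n r x f j))"
proof -
  obtain P where P: "P \<in> SpanL r" "\<forall>f\<in>Omega r. A f = ev n P f"
    using Zalg_span[OF assms] by blast
  obtain F c where Fc: "finite F" "F \<subseteq> mon_idx r" "P = (\<Sum>x\<in>F. sg 0 (c x) * Mon r x)"
    using span_repr[OF P(1)] by blast
  have "ev n P f j = (\<Sum>x\<in>F. c x * sigma_mon n r x f j)" for f j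
    unfolding Fc(3) ev_sum ev_smult ev_Mon by (simp add: op_smult_def)
  then show ?thesis using P Fc by auto
qed




lemma mult_expand: "P * Q = (\<Sum>a\<in>ks P. \<Sum>b\<in>ks Q. sg (a + b) (lk P a * lk Q b))"
proof -
  have "P * Q = (\<Sum>a\<in>ks P. sg a (lk P a)) * (\<Sum>b\<in>ks Q. sg b (lk Q b))"
    by (rule arg_cong2[where f="(*)"]) (rule poly_expand)+
  then show ?thesis by (simp add: sum_distrib_left sum_distrib_right mult_single, subst sum.swap, simp)
qed

lemma lookup_mult_expand:
  "lk (P * Q) k = (\<Sum>a\<in>ks P. \<Sum>b\<in>ks Q. if a + b = k then lk P a * lk Q b else 0)"
  by (subst mult_expand) (simp add: lookup_sum lookup_single when_def)

lemma lk_smult: "lk (sg 0 c * P) k = c * lk P k"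
proof (cases "c = 0")
  case True then show ?thesis by simp
next
  case False
  then have "lk (sg 0 c * P) k = (\<Sum>b\<in>ks P. if b = k then c * lk P b else 0)"
    by (simp add: lookup_mult_expand)
  also have "\<dots> = c * lk P k" by (simp add: in_keys_iff)
  finally show ?thesis .
qed

definition good :: "nat \<Rightarrow> K \<Rightarrow> bool" where
  "good r a \<longleftrightarrow> (\<forall>i. i = 0 \<or> i > r \<longrightarrow> lk a i = 0)"

definition GL :: "nat \<Rightarrow> L set" where "GL r = {P. \<forall>a\<in>ks P. good r a}"

lemma good_add: "good r a \<Longrightarrow> good r b \<Longrightarrow> good r (a + b)"
  by (auto simp: good_def lookup_add)

lemma GL_ringlike: "ringlike (GL r)"
proof -
  have mult: "P * Q \<in> GL r" if "P \<in> GL r" "Q \<in> GL r" for P Q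
    using that keys_mult[of P Q] by (auto simp: GL_def intro!: good_add)
  have "1 \<in> GL r" by (auto simp: GL_def good_def keys_one)
  moreover have "P + Q \<in> GL r" if "P \<in> GL r" "Q \<in> GL r" for P Q
    using that keys_add[of P Q] by (auto simp: GL_def)
  moreover have "sg 0 c \<in> GL r" for c by (auto simp: GL_def good_def)
  ultimately show ?thesis unfolding ringlike_def using mult by blast
qed

lemma X_GL: "s \<in> {1..r} \<Longrightarrow> X s \<in> GL r"
  by (auto simp: GL_def X_def good_def lookup_single when_def)

lemma Ez_GL: "Ez r k \<in> GL r"
  by (auto simp: GL_def Ez_def good_def Dk_def lookup_sum lookup_single when_def)

lemma Mon_GL: "Mon r x \<in> GL r"
proof -
  note rl = GL_ringlike[of r]
  have "esym X r s \<in> GL r" for s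
    unfolding esym_def by (intro rl_sum[OF rl] rl_prod[OF rl]) (auto intro!: X_GL)
  then show ?thesis unfolding Mon_def
    by (intro rl_mult[OF rl] rl_prod[OF rl] rl_pow[OF rl] Ez_GL)
qed

lemma shift_inj:
  assumes "n \<ge> 1" "good r a" "good r b" "shift n a (replicate r 0) = shift n b (replicate r 0)"
  shows "a = b"
proof (rule poly_mapping_eqI)
  fix i
  show "lk a i = lk b i"
  proof (cases "i = 0 \<or> i > r")
    case True then show ?thesis using assms(2,3) by (auto simp: good_def)
  next
    case False
    then obtain i' where i': "i = Suc i'" "i' < r" by (cases i) auto
    have "shift n a (replicate r 0) ! i' = shift n b (replicate r 0) ! i'" using assms(4) by simp
    then show ?thesis using i' assms(1) by simp
  qed
qed

lemma ev_inj:
  assumes "n \<ge> 1" "P \<in> GL r" "\<forall>f\<in>Omega r. \<forall>j. ev n P f j = 0"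
  shows "P = 0"
proof (rule ccontr)
  assume "P \<noteq> 0"
  then obtain a0 where a0: "a0 \<in> ks P" by (metis all_not_in_conv keys_eq_empty)
  define j0 where "j0 = (replicate r 0 :: int list)"
  define l0 where "l0 = shift n a0 j0"
  define f0 where "f0 = (\<lambda>l. if l = l0 then (1::qv) else 0)"
  have "f0 \<in> Omega r"
  proof -
    have "{l. f0 l \<noteq> 0} = {l0}" by (auto simp: f0_def)
    then show ?thesis by (auto simp: Omega_def f0_def l0_def j0_def)
  qed
  then have "ev n P f0 j0 = 0" using assms(3) by blast
  moreover have "ev n P f0 j0 = (\<Sum>a\<in>ks P. if a = a0 then lk P a else 0)"
    unfolding ev_def
  proof (rule sum.cong)
    fix a assume a: "a \<in> ks P"
    have "shift n a j0 = l0 \<longleftrightarrow> a = a0"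
      using shift_inj[OF assms(1), of r a a0] a a0 assms(2) by (auto simp: l0_def j0_def GL_def)
    then show "lk P a * f0 (shift n a j0) = (if a = a0 then lk P a else 0)" by (auto simp: f0_def)
  qed simp
  moreover have "\<dots> = lk P a0" using a0 by simp
  ultimately show False using a0 by (simp add: in_keys_iff)
qed




lemma le_pm_iff: "(a::K) \<le> b \<longleftrightarrow> less_fun (lk a) (lk b) \<or> a = b"
  by (simp add: less_eq_poly_mapping_def)

definition domi :: "L \<Rightarrow> K \<Rightarrow> qv \<Rightarrow> bool" where
  "domi P m c \<longleftrightarrow> lk P m = c \<and> (\<forall>k. lk P k \<noteq> 0 \<longrightarrow> k \<le> m)"

lemma domi_mult:
  assumes "domi P a c" "domi Q b d"
  shows "domi (P * Q) (a + b) (c * d)"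
proof -
  have aP: "a' \<le> a" if "a' \<in> ks P" for a' using assms(1) that by (auto simp: domi_def in_keys_iff)
  have bQ: "b' \<le> b" if "b' \<in> ks Q" for b' using assms(2) that by (auto simp: domi_def in_keys_iff)
  have "lk (P * Q) (a + b) = (\<Sum>a'\<in>ks P. \<Sum>b'\<in>ks Q. if a' = a \<and> b' = b then lk P a' * lk Q b' else 0)"
    unfolding lookup_mult_expand
  proof (intro sum.cong refl)
    fix a' b' assume h: "a' \<in> ks P" "b' \<in> ks Q"
    have "a' + b' = a + b \<longleftrightarrow> a' = a \<and> b' = b"
    proof
      assume e: "a' + b' = a + b"
      show "a' = a \<and> b' = b"
      proof (rule ccontr)
        assume "\<not> (a' = a \<and> b' = b)"
        then have "a' < a \<or> b' < b" using aP[OF h(1)] bQ[OF h(2)] by auto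
        then have "a' + b' < a + b"
          using aP[OF h(1)] bQ[OF h(2)] add_less_le_mono add_le_less_mono by blast
        then show False using e by simp
      qed
    qed auto
    then show "(if a' + b' = a + b then lk P a' * lk Q b' else 0) = (if a' = a \<and> b' = b then lk P a' * lk Q b' else 0)"
      by simp
  qed
  also have "\<dots> = (\<Sum>a'\<in>ks P. if a' = a then (\<Sum>b'\<in>ks Q. if b' = b then lk P a' * lk Q b' else 0) else 0)"
    by (intro sum.cong) auto
  also have "\<dots> = (if a \<in> ks P then (\<Sum>b'\<in>ks Q. if b' = b then lk P a * lk Q b' else 0) else 0)"
    by (rule sum.delta) simp
  also have "\<dots> = lk P a * lk Q b"
    by (simp only: sum.delta finite_keys) (auto simp: in_keys_iff)
  also have "\<dots> = c * d" using assms by (simp add: domi_def)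
  finally have 1: "lk (P * Q) (a + b) = c * d" .
  have 2: "k \<le> a + b" if "lk (P * Q) k \<noteq> 0" for k
  proof -
    from that obtain a' where A: "a' \<in> ks P" "(\<Sum>b'\<in>ks Q. if a' + b' = k then lk P a' * lk Q b' else 0) \<noteq> 0"
      unfolding lookup_mult_expand by (metis (no_types, lifting) sum.not_neutral_contains_not_neutral)
    obtain b' where B: "b' \<in> ks Q" "(if a' + b' = k then lk P a' * lk Q b' else 0) \<noteq> 0"
      using sum.not_neutral_contains_not_neutral[OF A(2)] by blast
    from A B have "k = a' + b'" "a' \<le> a" "b' \<le> b" using aP bQ by (auto split: if_splits)
    then show ?thesis by (simp add: add_mono)
  qed
  show ?thesis using 1 2 by (simp add: domi_def)
qed

lemma domi_one: "domi 1 0 1"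
  by (auto simp: domi_def lookup_one when_def)

lemma domi_single: "domi (sg a 1) a 1"
  by (auto simp: domi_def lookup_single when_def)

lemma domi_pow: "domi P a c \<Longrightarrow> domi (P ^ m) (of_nat m * a) (c ^ m)"
proof (induction m)
  case 0 then show ?case by (simp add: domi_one)
next
  case (Suc m)
  have "a + of_nat m * a = of_nat (Suc m) * a" by (simp add: distrib_right)
  then show ?case using domi_mult[OF Suc.prems Suc.IH[OF Suc.prems]] by simp
qed

lemma domi_prod:
  "(\<And>s. s \<in> S \<Longrightarrow> domi (g s) (a s) (c s)) \<Longrightarrow> domi (prod g S) (\<Sum>s\<in>S. a s) (\<Prod>s\<in>S. c s)"
  by (induction S rule: infinite_finite_induct) (auto simp: domi_one intro: domi_mult)

lemma lk_chi: "finite S \<Longrightarrow> lk (chi S) i = (if i \<in> S then 1 else 0)"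
  by (simp add: chi_def lookup_sum lookup_single when_def)

lemma chi_inj:
  assumes "finite S" "finite T" "chi S = chi T" shows "S = T"
proof (rule set_eqI)
  fix i
  have "lk (chi S) i = lk (chi T) i" using assms(3) by simp
  then show "(i \<in> S) = (i \<in> T)" using assms(1,2) by (simp add: lk_chi split: if_splits)
qed

lemma lex:
  assumes "S \<subseteq> {1..r}" "card S = k"
  shows "chi S \<le> chi {1..k}"
proof (cases "{1..k} \<subseteq> S")
  case True
  have "finite S" using assms finite_subset by blast
  then have "S = {1..k}" using True assms card_subset_eq[of S "{1..k}"] by auto
  then show ?thesis by simp
next
  case False
  have fin: "finite S" using assms finite_subset by blast
  define i where "i = (LEAST i. i \<in> {1..k} \<and> i \<notin> S)"
  have ex: "\<exists>i. i \<in> {1..k} \<and> i \<notin> S" using False by auto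
  have i: "i \<in> {1..k}" "i \<notin> S" using LeastI_ex[OF ex] by (auto simp: i_def)
  have below: "i' \<in> S" if "i' \<in> {1..k}" "i' < i" for i'
    using not_less_Least[of i' "\<lambda>i. i \<in> {1..k} \<and> i \<notin> S"] that by (auto simp: i_def)
  have "less_fun (lk (chi S)) (lk (chi {1..k}))"
    unfolding less_fun_def
  proof (intro exI[of _ i] conjI allI impI)
    show "lk (chi S) i < lk (chi {1..k}) i" using i fin by (simp add: lk_chi)
    fix i' assume "i' < i"
    show "lk (chi S) i' = lk (chi {1..k}) i'"
    proof (cases "i' = 0")
      case True then show ?thesis using assms(1) fin by (auto simp: lk_chi)
    next
      case False
      then have "i' \<in> {1..k}" using \<open>i' < i\<close> i by auto
      then show ?thesis using below \<open>i' < i\<close> fin by (simp add: lk_chi)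
    qed
  qed
  then show ?thesis by (simp add: le_pm_iff)
qed

lemma domi_E:
  assumes "1 \<le> k" "k \<le> r"
  shows "domi (esym X r k) (chi {1..k}) 1"
proof -
  let ?Sk = "{S. S \<subseteq> {1..r} \<and> card S = k}"
  have finS: "finite S" if "S \<in> ?Sk" for S using that finite_subset by blast
  have lk_e: "lk (esym X r k) m = (\<Sum>S\<in>?Sk. if chi S = m then 1 else 0)" for m
    by (simp add: esym_def prod_X lookup_sum lookup_single when_def)
  have mem: "{1..k} \<in> ?Sk" using assms by auto
  have "lk (esym X r k) (chi {1..k}) = (\<Sum>S\<in>?Sk. if S = {1..k} then 1 else 0)"
    unfolding lk_e
  proof (rule sum.cong[OF refl])
    fix S assume S: "S \<in> ?Sk"
    have "chi S = chi {1..k} \<longleftrightarrow> S = {1..k}" using chi_inj[OF finS[OF S], of "{1..k}"] by auto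
    then show "(if chi S = chi {1..k} then 1 else 0) = (if S = {1..k} then (1::qv) else 0)" by simp
  qed
  also have "\<dots> = 1" using mem by simp
  finally have 1: "lk (esym X r k) (chi {1..k}) = 1" .
  have 2: "m \<le> chi {1..k}" if "lk (esym X r k) m \<noteq> 0" for m
  proof -
    from that obtain S where "S \<in> ?Sk" "chi S = m" unfolding lk_e
      by (metis (mono_tags, lifting) sum.not_neutral_contains_not_neutral)
    then show ?thesis using lex by blast
  qed
  show ?thesis using 1 2 by (simp add: domi_def)
qed

definition lead :: "nat \<Rightarrow> (nat \<Rightarrow> nat) \<times> int \<Rightarrow> K" where
  "lead r x = (\<Sum>s\<in>{1..<r}. of_nat (fst x s) * chi {1..s}) + Dk r (snd x)"

lemma domi_Mon: "domi (Mon r x) (lead r x) 1"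
proof -
  have "domi (\<Prod>s\<in>{1..<r}. esym X r s ^ fst x s) (\<Sum>s\<in>{1..<r}. of_nat (fst x s) * chi {1..s}) (\<Prod>s\<in>{1..<r}. 1 ^ fst x s)"
    by (rule domi_prod, rule domi_pow, rule domi_E) auto
  then have "domi (\<Prod>s\<in>{1..<r}. esym X r s ^ fst x s) (\<Sum>s\<in>{1..<r}. of_nat (fst x s) * chi {1..s}) 1" by simp
  from domi_mult[OF this domi_single[of "Dk r (snd x)"]]
  show ?thesis by (simp add: Mon_def lead_def Ez_def)
qed




definition Gs :: "nat \<Rightarrow> (nat \<Rightarrow> nat) \<times> int \<Rightarrow> nat \<Rightarrow> int" where
  "Gs r x i = (\<Sum>s\<in>{1..<r}. int (fst x s) * (if i \<le> s then 1 else 0))"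

lemma lk_ofnat_K: "lk (of_nat m * (a::K)) i = int m * lk a i"
proof -
  have "lk (sg 0 (of_nat m) * a) i = of_nat m * lk a i" by (rule lk_smult)
  then show ?thesis by (simp only: single_of_nat)
qed

lemma lk_lead: "1 \<le> i \<Longrightarrow> lk (lead r x) i = Gs r x i + (if i \<le> r then snd x else 0)"
  unfolding lead_def Gs_def
  by (simp add: lookup_add lookup_sum lk_ofnat_K lk_chi Dk_def lookup_single when_def)

lemma Gs_r: "Gs r x r = 0"
  by (simp add: Gs_def)

lemma Gs_step: "1 \<le> i \<Longrightarrow> i < r \<Longrightarrow> Gs r x i = int (fst x i) + Gs r x (Suc i)"
proof -
  assume i: "1 \<le> i" "i < r"
  have "Gs r x i = (\<Sum>s\<in>{1..<r}. (if s = i then int (fst x s) else 0) + int (fst x s) * (if Suc i \<le> s then 1 else 0))"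
    unfolding Gs_def by (rule sum.cong) auto
  also have "\<dots> = int (fst x i) + Gs r x (Suc i)"
    using i by (simp add: sum.distrib Gs_def)
  finally show ?thesis .
qed

lemma lead_inj:
  assumes "1 \<le> r" "x \<in> mon_idx r" "y \<in> mon_idx r" "lead r x = lead r y"
  shows "x = y"
proof -
  have snd: "snd x = snd y"
    using lk_lead[OF assms(1), of r x] lk_lead[OF assms(1), of r y] assms(4) by (simp add: Gs_r)
  have "fst x i = fst y i" for i
  proof (cases "1 \<le> i \<and> i < r")
    case True
    have "lk (lead r x) i - lk (lead r x) (Suc i) = int (fst x i)"
      using True lk_lead[of i r x] lk_lead[of "Suc i" r x] Gs_step[of i r x] by simp
    moreover have "lk (lead r y) i - lk (lead r y) (Suc i) = int (fst y i)"
      using True lk_lead[of i r y] lk_lead[of "Suc i" r y] Gs_step[of i r y] by simp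
    ultimately show ?thesis using assms(4) by simp
  next
    case False
    then have i: "i = 0 \<or> i \<ge> r" by auto
    have "\<forall>j. (j = 0 \<or> j \<ge> r) \<longrightarrow> fst x j = 0" "\<forall>j. (j = 0 \<or> j \<ge> r) \<longrightarrow> fst y j = 0"
      using assms(2,3) by (auto simp: mon_idx_def)
    then show ?thesis using i by auto
  qed
  then show ?thesis using snd by (simp add: prod_eq_iff fun_eq_iff)
qed

lemma lin_indep:
  assumes "1 \<le> r" "finite F" "F \<subseteq> mon_idx r" "(\<Sum>x\<in>F. sg 0 (c x) * Mon r x) = 0"
  shows "\<forall>x\<in>F. c x = 0"
proof (rule ccontr)
  assume nt: "\<not> (\<forall>x\<in>F. c x = 0)"
  define F' where "F' = {x\<in>F. c x \<noteq> 0}"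
  have F'ne: "F' \<noteq> {}" "finite F'" using nt assms(2) by (auto simp: F'_def)
  define M where "M = Max (lead r ` F')"
  have "M \<in> lead r ` F'" unfolding M_def using F'ne by simp
  then obtain x0 where x0: "x0 \<in> F'" "lead r x0 = M" by auto
  have Mmax: "lead r x \<le> M" if "x \<in> F'" for x unfolding M_def using F'ne that by simp
  have "lk (\<Sum>x\<in>F. sg 0 (c x) * Mon r x) M = (\<Sum>x\<in>F. c x * lk (Mon r x) M)"
    by (simp add: lookup_sum lk_smult)
  also have "\<dots> = (\<Sum>x\<in>F. if x = x0 then c x else 0)"
  proof (rule sum.cong[OF refl])
    fix x assume x: "x \<in> F"
    show "c x * lk (Mon r x) M = (if x = x0 then c x else 0)"
    proof (cases "x = x0")
      case True
      then show ?thesis using domi_Mon[of r x0] x0 by (simp add: domi_def)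
    next
      case False
      note ne = False
      show ?thesis
      proof (cases "c x = 0")
        case True then show ?thesis using ne by simp
      next
        case c: False
        then have xF': "x \<in> F'" using x by (simp add: F'_def)
        have "lead r x \<noteq> M"
          using lead_inj[OF assms(1), of x x0] False x0 xF' assms(3) by (auto simp: F'_def)
        then have lt: "lead r x < M" using Mmax[OF xF'] by simp
        have "lk (Mon r x) M = 0"
        proof (rule ccontr)
          assume "lk (Mon r x) M \<noteq> 0"
          then have "M \<le> lead r x" using domi_Mon[of r x] by (simp add: domi_def)
          then show False using lt by simp
        qed
        then show ?thesis using False by simp
      qed
    qed
  qed
  also have "\<dots> = c x0" using x0 assms(2) by (simp add: F'_def sum.delta')
  finally have "c x0 = 0" using assms(4) by simp
  then show False using x0 by (simp add: F'_def)
qed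

lemma part2:
  assumes "1 \<le> n" "1 \<le> r" "finite F" "F \<subseteq> mon_idx r"
    "\<forall>f\<in>Omega r. \<forall>j. (\<Sum>x\<in>F. c x * sigma_mon n r x f j) = 0"
  shows "\<forall>x\<in>F. c x = (0::qv)"
proof -
  define P where "P = (\<Sum>x\<in>F. sg 0 (c x) * Mon r x)"
  have ev: "ev n P f j = (\<Sum>x\<in>F. c x * sigma_mon n r x f j)" for f j
    unfolding P_def ev_sum ev_smult ev_Mon by (simp add: op_smult_def)
  have "P \<in> GL r" unfolding P_def
    by (intro rl_sum[OF GL_ringlike] rl_smult[OF GL_ringlike] Mon_GL)
  then have "P = 0" using ev_inj[OF assms(1)] assms(5) ev by simp
  then show ?thesis using lin_indep[OF assms(2,3,4)] P_def by simp
qed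


theorem proposition5p2p3:
  fixes n r :: nat
  assumes "n \<ge> 2" and "r \<ge> 1"
  shows "(\<forall>x\<in>mon_idx r. sigma_mon n r x \<in> Zalg n r)
    \<and> (\<forall>F c. finite F \<longrightarrow> F \<subseteq> mon_idx r \<longrightarrow>
          (\<forall>f\<in>Omega r. \<forall>j. (\<Sum>x\<in>F. c x * sigma_mon n r x f j) = 0) \<longrightarrow>
          (\<forall>x\<in>F. c x = (0::qv)))
    \<and> (\<forall>A\<in>Zalg n r. \<exists>F c. finite F \<and> F \<subseteq> mon_idx r \<and>
          (\<forall>f\<in>Omega r. \<forall>j. A f j = (\<Sum>x\<in>F. c x * sigma_mon n r x f j)))"
proof -
  have 1: "\<forall>x\<in>mon_idx r. sigma_mon n r x \<in> Zalg n r" using part1 by blast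
  have 2: "\<forall>F c. finite F \<longrightarrow> F \<subseteq> mon_idx r \<longrightarrow>
          (\<forall>f\<in>Omega r. \<forall>j. (\<Sum>x\<in>F. c x * sigma_mon n r x f j) = 0) \<longrightarrow>
          (\<forall>x\<in>F. c x = (0::qv))"
  proof (intro allI impI)
    fix F and c :: "(nat \<Rightarrow> nat) \<times> int \<Rightarrow> qv"
    assume "finite F" "F \<subseteq> mon_idx r"
      "\<forall>f\<in>Omega r. \<forall>j. (\<Sum>x\<in>F. c x * sigma_mon n r x f j) = 0"
    then show "\<forall>x\<in>F. c x = (0::qv)" using part2[of n r F c] assms by simp
  qed
  have 3: "\<forall>A\<in>Zalg n r. \<exists>F c. finite F \<and> F \<subseteq> mon_idx r \<and>
          (\<forall>f\<in>Omega r. \<forall>j. A f j = (\<Sum>x\<in>F. c x * sigma_mon n r x f j))"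
    using part3 by blast
  show ?thesis using 1 2 3 by blast
qed

end
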